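(* Fix a company $i\in\mathcal C$ and suppose that every vehicle of company $i$ can reach at least one station, i.e. $\bigcup_{j\in\mathcal M}\mathcal F^i_j=\mathcal V_i$. Define $\overline{\mathcal K}_i\subseteq\mathcal P_{\mathcal M}$ as the set of all $x^i\in\mathcal P_{\mathcal M}$ such that for every proper subset $S\subsetneq\mathcal M$, $$N_i\sum_{j\in S}x^i_j\;\le\;\max\Big\{0,\ \Big|\bigcup_{j\in S}\mathcal F^i_j\Big|-|S|\Big\}.$$ If $\overline{\mathcal K}_i\neq\emptyset$, then every $x^i\in\overline{\mathcal K}_i$ is feasible, and $\overline{\mathcal K}_i$ is compact and convex.
   Context: Setting: $\mathcal M$ is a finite set of charging stations with $m=|\mathcal M|\ge 2$. Company $i$ owns a finite set $\mathcal V_i$ of vehicles with $N_i=|\mathcal V_i|\ge 1$. For each station $j\in\mathcal M$, $\mathcal F^i_j\subseteq\mathcal V_i$ is the set of vehicles of company $i$ that can reach station $j$. $\mathcal P_{\mathcal M}=\{x\in\mathbb R_{\ge 0}^{\mathcal M}:\sum_{j\in\mathcal M}x_j=1\}$. Rounding: given $x^i\in\mathcal P_{\mathcal M}$, a rounding of $x^i$ is an integer vector $n^i\in\mathbb Z_{\ge0}^{\mathcal M}$ with $n^i_j\in\{\lfloor N_ix^i_j\rfloor,\lceil N_ix^i_j\rceil\}$ for every $j$ and $\sum_{j\in\mathcal M}n^i_j=N_i$. A valid assignment for $n^i$ is a map $\phi:\mathcal V_i\to\mathcal M$ with $v\in\mathcal F^i_{\phi(v)}$ for all $v\in\mathcal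 V_i$ and $|\phi^{-1}(j)|=n^i_j$ for all $j\in\mathcal M$. The vector $x^i\in\mathcal P_{\mathcal M}$ is called feasible if every rounding of $x^i$ admits a valid assignment. *)

theory Defs
  imports "HOL-Analysis.Analysis"
begin

text \<open>Stations are the elements of a finite type 'm (so the station set M is UNIV);
  a distribution over stations is a vector x :: real^'m.\<close>

definition prob_simplex :: "(real ^ 'm::finite) set" where
  "prob_simplex = {x. (\<forall>j. 0 \<le> x $ j) \<and> (\<Sum>j\<in>UNIV. x $ j) = 1}"

definition is_rounding :: "nat \<Rightarrow> real ^ 'm::finite \<Rightarrow> ('m \<Rightarrow> nat) \<Rightarrow> bool" where
  "is_rounding N x n \<longleftrightarrow>
     (\<forall>j. int (n j) = \<lfloor>real N * x $ j\<rfloor> \<or> int (n j) = \<lceil>real N * x $ j\<rceil>) \<and>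
     (\<Sum>j\<in>UNIV. n j) = N"

definition valid_assignment ::
  "'v set \<Rightarrow> ('m::finite \<Rightarrow> 'v set) \<Rightarrow> ('m \<Rightarrow> nat) \<Rightarrow> ('v \<Rightarrow> 'm) \<Rightarrow> bool" where
  "valid_assignment V F n phi \<longleftrightarrow>
     (\<forall>v\<in>V. v \<in> F (phi v)) \<and> (\<forall>j. card {v\<in>V. phi v = j} = n j)"

definition feasible :: "'v set \<Rightarrow> ('m::finite \<Rightarrow> 'v set) \<Rightarrow> real ^ 'm \<Rightarrow> bool" where
  "feasible V F x \<longleftrightarrow> x \<in> prob_simplex \<and>
     (\<forall>n. is_rounding (card V) x n \<longrightarrow> (\<exists>phi. valid_assignment V F n phi))"

definition Kbar :: "'v set \<Rightarrow> ('m::finite \<Rightarrow> 'v set) \<Rightarrow> (real ^ 'm) set" where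
  "Kbar V F = {x \<in> prob_simplex. \<forall>S. S \<subset> (UNIV :: 'm set) \<longrightarrow>
       real (card V) * (\<Sum>j\<in>S. x $ j)
         \<le> max 0 (real (card (\<Union>j\<in>S. F j)) - real (card S))}"

end

theory Submission
  imports Defs
begin
lemma hall:
  assumes "finite I" "\<forall>i\<in>I. finite (A i)" "\<forall>J\<subseteq>I. card J \<le> card (\<Union>(A ` J))"
  shows "\<exists>f. inj_on f I \<and> (\<forall>i\<in>I. f i \<in> A i)"
  using assms
proof (induction "card I" arbitrary: I A rule: less_induct)
  case less
  note fin = less.prems(1) and finA = less.prems(2) and H = less.prems(3)
  have finU: "finite (\<Union>(A ` J))" if "J \<subseteq> I" for J
    using that fin finA by (simp add: finite_subset subset_iff)
  show ?case
  proof (cases "\<exists>J. J \<noteq> {} \<and> J \<subset> I \<and> card (\<Union>(A ` J)) \<le> card J")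
    case True
    then obtain J where J: "J \<noteq> {}" "J \<subset> I" "card (\<Union>(A ` J)) \<le> card J" by blast
    have finJ: "finite J" using J fin by (meson finite_subset psubset_imp_subset)
    have cJ: "card J < card I" using J fin by (simp add: psubset_card_mono)
    have HJ: "\<forall>K\<subseteq>J. card K \<le> card (\<Union>(A ` K))" using H J by blast
    have fAJ: "\<forall>i\<in>J. finite (A i)" using finA J by blast
    obtain f1 where f1: "inj_on f1 J" "\<forall>i\<in>J. f1 i \<in> A i"
      using less.hyps[OF cJ finJ fAJ HJ] by blast
    define B where "B = (\<lambda>k. A k - \<Union>(A ` J))"
    have cIJ: "card (I - J) < card I"
    proof -
      have "I - J \<subset> I" using J by blast
      thus ?thesis using fin by (simp add: psubset_card_mono)
    qed
    have HB: "\<forall>K\<subseteq>I - J. card K \<le> card (\<Union>(B ` K))"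
    proof (intro allI impI)
      fix K assume K: "K \<subseteq> I - J"
      have eq: "\<Union>(B ` K) = \<Union>(A ` (K \<union> J)) - \<Union>(A ` J)" unfolding B_def by blast
      have KJ: "K \<union> J \<subseteq> I" using K J by blast
      have finK: "finite K" using K fin finite_subset by blast
      have "card (\<Union>(B ` K)) = card (\<Union>(A ` (K \<union> J))) - card (\<Union>(A ` J))"
        unfolding eq by (rule card_Diff_subset) (use finU J in auto)
      moreover have "card (K \<union> J) \<le> card (\<Union>(A ` (K \<union> J)))" using H KJ by blast
      moreover have "card (K \<union> J) = card K + card J"
        using K finK finJ by (subst card_Un_disjoint) auto
      ultimately show "card K \<le> card (\<Union>(B ` K))" using J(3) by linarith
    qed
    have fB: "\<forall>i\<in>I - J. finite (B i)" using finA unfolding B_def by auto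
    have fIJ: "finite (I - J)" using fin by blast
    obtain f2 where f2: "inj_on f2 (I - J)" "\<forall>i\<in>I - J. f2 i \<in> B i"
      using less.hyps[OF cIJ fIJ fB HB] by blast
    define f where "f = (\<lambda>i. if i \<in> J then f1 i else f2 i)"
    have "inj_on f I"
    proof (rule inj_onI)
      fix a b assume a: "a \<in> I" and b: "b \<in> I" and e: "f a = f b"
      show "a = b"
      proof (cases "a \<in> J"; cases "b \<in> J")
        assume "a \<in> J" "b \<in> J" thus ?thesis using e f1 unfolding f_def by (auto dest: inj_onD)
      next
        assume ab: "a \<in> J" "b \<notin> J"
        have "f1 a \<in> \<Union>(A ` J)" using f1(2) ab by blast
        moreover have "f2 b \<notin> \<Union>(A ` J)" using f2(2) ab b unfolding B_def by blast
        moreover have "f1 a = f2 b" using e ab unfolding f_def by simp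
        ultimately show ?thesis by simp
      next
        assume ab: "a \<notin> J" "b \<in> J"
        have "f1 b \<in> \<Union>(A ` J)" using f1(2) ab by blast
        moreover have "f2 a \<notin> \<Union>(A ` J)" using f2(2) ab a unfolding B_def by blast
        moreover have "f2 a = f1 b" using e ab unfolding f_def by simp
        ultimately show ?thesis by simp
      next
        assume "a \<notin> J" "b \<notin> J" thus ?thesis using e f2 a b unfolding f_def by (auto dest: inj_onD)
      qed
    qed
    moreover have "\<forall>i\<in>I. f i \<in> A i" using f1 f2 unfolding f_def B_def by auto
    ultimately show ?thesis by blast
  next
    case False
    show ?thesis
    proof (cases "I = {}")
      case True thus ?thesis by auto
    next
      case False2: False
      then obtain i where i: "i \<in> I" by blast
      have "card {i} \<le> card (\<Union>(A ` {i}))" using H i by blast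
      hence "card {i} \<le> card (A i)" by simp
      hence "A i \<noteq> {}" using finA i by auto
      then obtain x where x: "x \<in> A i" by blast
      define B where "B = (\<lambda>k. A k - {x})"
      have cI: "card (I - {i}) < card I" using fin i by (rule card_Diff1_less)
      have HB: "\<forall>K\<subseteq>I - {i}. card K \<le> card (\<Union>(B ` K))"
      proof (intro allI impI)
        fix K assume K: "K \<subseteq> I - {i}"
        show "card K \<le> card (\<Union>(B ` K))"
        proof (cases "K = {}")
          case True thus ?thesis by simp
        next
          case Kne: False
          have "K \<subset> I" using K i by blast
          hence lt: "card K < card (\<Union>(A ` K))" using False Kne by (meson not_le)
          have eq: "\<Union>(B ` K) = \<Union>(A ` K) - {x}" unfolding B_def by blast
          have "finite (\<Union>(A ` K))" using finU K by blast
          hence "card (\<Union>(A ` K)) \<le> card (\<Union>(A ` K) - {x}) + 1"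
            by (cases "x \<in> \<Union>(A ` K)") (auto simp: card_Diff_singleton)
          thus ?thesis using lt unfolding eq by linarith
        qed
      qed
      have fB: "\<forall>k\<in>I - {i}. finite (B k)" using finA unfolding B_def by auto
      have fI: "finite (I - {i})" using fin by blast
      obtain g where g: "inj_on g (I - {i})" "\<forall>k\<in>I - {i}. g k \<in> B k"
        using less.hyps[OF cI fI fB HB] by blast
      define f where "f = g(i := x)"
      have "inj_on f I"
      proof (rule inj_onI)
        fix a b assume a: "a \<in> I" and b: "b \<in> I" and e: "f a = f b"
        show "a = b" using a b e g unfolding f_def B_def
          by (cases "a = i"; cases "b = i") (auto dest: inj_onD)
      qed
      moreover have "\<forall>k\<in>I. f k \<in> A k" using g x unfolding f_def B_def by auto
      ultimately show ?thesis by blast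
    qed
  qed
qed


lemma assign:
  fixes V :: "'v set" and F :: "'m::finite \<Rightarrow> 'v set" and n :: "'m \<Rightarrow> nat"
  assumes finV: "finite V" and FV: "\<And>j. F j \<subseteq> V" and sn: "(\<Sum>j\<in>UNIV. n j) = card V"
    and HS: "\<forall>S. sum n S \<le> card (\<Union>j\<in>S. F j)"
  shows "\<exists>phi. valid_assignment V F n phi"
proof -
  define I where "I = Sigma (UNIV::'m set) (\<lambda>j. {..<n j})"
  define A where "A = (\<lambda>p::'m \<times> nat. F (fst p))"
  have finI: "finite I" unfolding I_def by simp
  have finA: "\<forall>p\<in>I. finite (A p)" unfolding A_def using finV FV finite_subset by blast
  have HI: "\<forall>T\<subseteq>I. card T \<le> card (\<Union>(A ` T))"
  proof (intro allI impI)
    fix T assume T: "T \<subseteq> I"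
    have "T \<subseteq> Sigma (fst ` T) (\<lambda>j. {..<n j})" using T unfolding I_def by force
    hence "card T \<le> card (Sigma (fst ` T) (\<lambda>j. {..<n j}))" by (rule card_mono[rotated]) simp
    also have "\<dots> = sum n (fst ` T)" by (simp add: card_SigmaI)
    also have "\<dots> \<le> card (\<Union>j\<in>fst ` T. F j)" using HS by blast
    also have "(\<Union>j\<in>fst ` T. F j) = \<Union>(A ` T)" unfolding A_def by auto
    finally show "card T \<le> card (\<Union>(A ` T))" .
  qed
  obtain f where f: "inj_on f I" "\<forall>p\<in>I. f p \<in> A p" using hall[OF finI finA HI] by blast
  have sub: "f ` I \<subseteq> V" using f(2) FV unfolding A_def by blast
  have "card (f ` I) = card I" using f(1) by (rule card_image)
  also have "\<dots> = card V" unfolding I_def using sn by (simp add: card_SigmaI)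
  finally have fIV: "f ` I = V" using sub finV by (metis card_subset_eq)
  define phi where "phi = (\<lambda>v. fst (inv_into I f v))"
  have 1: "\<forall>v\<in>V. v \<in> F (phi v)"
  proof
    fix v assume v: "v \<in> V"
    hence vi: "v \<in> f ` I" using fIV by simp
    have "inv_into I f v \<in> I" using vi by (rule inv_into_into)
    moreover have "f (inv_into I f v) = v" using vi by (rule f_inv_into_f)
    ultimately show "v \<in> F (phi v)" using f(2) unfolding A_def phi_def by metis
  qed
  have 2: "card {v\<in>V. phi v = j} = n j" for j
  proof -
    have "{v\<in>V. phi v = j} = f ` ({j} \<times> {..<n j})"
    proof
      show "{v\<in>V. phi v = j} \<subseteq> f ` ({j} \<times> {..<n j})"
      proof
        fix v assume v: "v \<in> {v\<in>V. phi v = j}"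
        hence vi: "v \<in> f ` I" using fIV by simp
        have p: "inv_into I f v \<in> I" using vi by (rule inv_into_into)
        have fp: "f (inv_into I f v) = v" using vi by (rule f_inv_into_f)
        have "inv_into I f v \<in> {j} \<times> {..<n j}" using p v unfolding I_def phi_def
          by (cases "inv_into I f v") auto
        thus "v \<in> f ` ({j} \<times> {..<n j})" using fp by force
      qed
    next
      show "f ` ({j} \<times> {..<n j}) \<subseteq> {v\<in>V. phi v = j}"
      proof
        fix v assume "v \<in> f ` ({j} \<times> {..<n j})"
        then obtain k where k: "k < n j" "v = f (j, k)" by blast
        have jk: "(j, k) \<in> I" unfolding I_def using k by simp
        have "v \<in> V" using jk k fIV by blast
        moreover have "inv_into I f v = (j, k)" using k jk f(1) by (simp add: inv_into_f_f)
        ultimately show "v \<in> {v\<in>V. phi v = j}" unfolding phi_def by simp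
      qed
    qed
    moreover have "inj_on f ({j} \<times> {..<n j})"
      using f(1) by (rule inj_on_subset) (auto simp: I_def)
    ultimately show ?thesis by (simp add: card_image card_cartesian_product)
  qed
  show ?thesis using 1 2 unfolding valid_assignment_def by blast
qed


lemma rounding_bounds:
  assumes "is_rounding N x n"
  shows "real (n j) \<le> real N * x $ j + 1" and "x $ j = 0 \<Longrightarrow> n j = 0"
proof -
  have h: "int (n j) = \<lfloor>real N * x $ j\<rfloor> \<or> int (n j) = \<lceil>real N * x $ j\<rceil>"
    using assms unfolding is_rounding_def by blast
  have "real_of_int (int (n j)) \<le> real N * x $ j + 1"
    using h floor_le_ceiling[of "real N * x $ j"] ceiling_correct[of "real N * x $ j"]
      of_int_floor_le[of "real N * x $ j"] by linarith
  thus "real (n j) \<le> real N * x $ j + 1" by simp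
  show "x $ j = 0 \<Longrightarrow> n j = 0" using h by auto
qed

theorem proposition1:
  fixes V :: "'v set" and F :: "'m::finite \<Rightarrow> 'v set"
  assumes "CARD('m) \<ge> 2"
    and "finite V" and "V \<noteq> {}"
    and "\<And>j. F j \<subseteq> V"
    and "(\<Union>j. F j) = V"
    and "Kbar V F \<noteq> {}"
  shows "(\<forall>x\<in>Kbar V F. feasible V F x) \<and> compact (Kbar V F) \<and> convex (Kbar V F)"
proof (intro conjI)
  note finV = assms(2) and FV = assms(4) and UF = assms(5)
  have Npos: "real (card V) > 0" using assms(2,3) by (simp add: card_gt_0_iff)
  show "\<forall>x\<in>Kbar V F. feasible V F x"
  proof
    fix x assume xK: "x \<in> Kbar V F"
    have xs: "x \<in> prob_simplex" using xK unfolding Kbar_def by blast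
    have xnn: "\<And>j. 0 \<le> x $ j" using xs unfolding prob_simplex_def by blast
    have xb: "\<And>S. S \<subset> UNIV \<Longrightarrow> real (card V) * (\<Sum>j\<in>S. x $ j)
         \<le> max 0 (real (card (\<Union>j\<in>S. F j)) - real (card S))"
      using xK unfolding Kbar_def by blast
    show "feasible V F x" unfolding feasible_def
    proof (intro conjI allI impI)
      show "x \<in> prob_simplex" by fact
      fix n assume rn: "is_rounding (card V) x n"
      have sn: "(\<Sum>j\<in>UNIV. n j) = card V" using rn unfolding is_rounding_def by blast
      have HS: "\<forall>S. sum n S \<le> card (\<Union>j\<in>S. F j)"
      proof
        fix S :: "'m set"
        show "sum n S \<le> card (\<Union>j\<in>S. F j)"
        proof (cases "S = UNIV")
          case True thus ?thesis using sn UF by simp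
        next
          case False
          hence SU: "S \<subset> UNIV" by blast
          define U where "U = card (\<Union>j\<in>S. F j)"
          have b: "real (card V) * (\<Sum>j\<in>S. x $ j) \<le> max 0 (real U - real (card S))"
            using xb[OF SU] unfolding U_def .
          show ?thesis
          proof (cases "card S \<le> U")
            case True
            have "real (sum n S) = (\<Sum>j\<in>S. real (n j))" by simp
            also have "\<dots> \<le> (\<Sum>j\<in>S. real (card V) * x $ j + 1)"
              by (rule sum_mono) (rule rounding_bounds(1)[OF rn])
            also have "\<dots> = real (card V) * (\<Sum>j\<in>S. x $ j) + real (card S)"
              by (simp add: sum.distrib sum_distrib_left)
            also have "\<dots> \<le> real U" using b True by simp
            finally have "real (sum n S) \<le> real U" .
            thus ?thesis unfolding U_def by (simp only: of_nat_le_iff)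
          next
            case False
            hence "real (card V) * (\<Sum>j\<in>S. x $ j) \<le> 0" using b by simp
            hence "(\<Sum>j\<in>S. x $ j) \<le> 0" using Npos by (simp add: mult_le_0_iff)
            moreover have "(\<Sum>j\<in>S. x $ j) \<ge> 0" using xnn by (simp add: sum_nonneg)
            ultimately have "(\<Sum>j\<in>S. x $ j) = 0" by simp
            hence "\<forall>j\<in>S. x $ j = 0" using xnn by (simp add: sum_nonneg_eq_0_iff)
            hence "\<forall>j\<in>S. n j = 0" using rounding_bounds(2)[OF rn] by blast
            thus ?thesis by simp
          qed
        qed
      qed
      show "\<exists>phi. valid_assignment V F n phi" by (rule assign[OF finV FV sn HS])
    qed
  qed
next
  have eq: "Kbar V F = (\<Inter>j. {x::real^'m. 0 \<le> x $ j}) \<inter> {x. (\<Sum>j\<in>UNIV. x $ j) = 1} \<inter>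
     (\<Inter>S\<in>{S. S \<subset> (UNIV::'m set)}. {x. real (card V) * (\<Sum>j\<in>S. x $ j)
         \<le> max 0 (real (card (\<Union>j\<in>S. F j)) - real (card S))})"
    unfolding Kbar_def prob_simplex_def by auto
  have cl: "closed (Kbar V F)" unfolding eq
    by (intro closed_Int closed_INT ballI closed_Collect_le closed_Collect_eq continuous_intros)
  have bd: "bounded (Kbar V F)"
    unfolding bounded_iff
  proof (intro exI ballI)
    fix x assume "x \<in> Kbar V F"
    hence xs: "x \<in> prob_simplex" unfolding Kbar_def by blast
    have "norm x \<le> (\<Sum>j\<in>UNIV. \<bar>x $ j\<bar>)" by (rule norm_le_l1_cart)
    also have "\<dots> = (\<Sum>j\<in>UNIV. x $ j)" using xs unfolding prob_simplex_def by simp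
    also have "\<dots> = 1" using xs unfolding prob_simplex_def by simp
    finally show "norm x \<le> 1" .
  qed
  show "compact (Kbar V F)" using cl bd by (simp add: compact_eq_bounded_closed)
next
  show "convex (Kbar V F)" unfolding convex_def
  proof (intro ballI allI impI)
    fix x y :: "real^'m" and u v :: real
    assume x: "x \<in> Kbar V F" and y: "y \<in> Kbar V F" and u: "0 \<le> u" and v: "0 \<le> v"
      and uv: "u + v = 1"
    have xs: "x \<in> prob_simplex" and ys: "y \<in> prob_simplex" using x y unfolding Kbar_def by auto
    have "u *\<^sub>R x + v *\<^sub>R y \<in> prob_simplex"
      using xs ys u v uv unfolding prob_simplex_def
      by (auto simp: sum.distrib sum_distrib_left[symmetric])
    moreover have "real (card V) * (\<Sum>j\<in>S. (u *\<^sub>R x + v *\<^sub>R y) $ j)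
         \<le> max 0 (real (card (\<Union>j\<in>S. F j)) - real (card S))" if S: "S \<subset> UNIV" for S
    proof -
      define c where "c = max 0 (real (card (\<Union>j\<in>S. F j)) - real (card S))"
      define a where "a = real (card V) * (\<Sum>j\<in>S. x $ j)"
      define b where "b = real (card V) * (\<Sum>j\<in>S. y $ j)"
      have ac: "a \<le> c" using x S unfolding Kbar_def a_def c_def by blast
      have bc: "b \<le> c" using y S unfolding Kbar_def b_def c_def by blast
      have "real (card V) * (\<Sum>j\<in>S. (u *\<^sub>R x + v *\<^sub>R y) $ j) = u * a + v * b"
        unfolding a_def b_def by (simp add: sum.distrib sum_distrib_left algebra_simps)
      also have "\<dots> \<le> u * c + v * c" using ac bc u v by (intro add_mono mult_left_mono)
      also have "\<dots> = (u + v) * c" by (simp add: algebra_simps)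
      also have "\<dots> = c" using uv by simp
      finally show ?thesis unfolding c_def .
    qed
    ultimately show "u *\<^sub>R x + v *\<^sub>R y \<in> Kbar V F" unfolding Kbar_def by blast
  qed
qed

end
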